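(* Let $G$ be a connected bipartite graph with color classes $E$ and $V$, and let $\Gamma$ be a spanning tree of $G$ inducing the hypertree $\mathbf f$ of $(V,E)$. Let $a,b,c$ be distinct elements of $E$ such that the unique path in $\Gamma$ from $c$ to $a$ passes through $b$. If $c$ can transfer valence to $a$ at $\mathbf f$, then $b$ can transfer valence to $a$ at $\mathbf f$.
   Context: A hypertree of $(V,E)$ is a function $\mathbf f\colon E\to\mathbf N$ such that some spanning tree of $G$ has degree $\mathbf f(e)+1$ at every $e\in E$; $\Gamma$ induces $\mathbf f$ if it has these degrees. For $x,y\in E$, $x$ can transfer valence to $y$ at $\mathbf f$ if the function obtained from $\mathbf f$ by decreasing $\mathbf f(x)$ by $1$ and increasing $\mathbf f(y)$ by $1$ is again a hypertree. *)

theory Defs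
  imports Main
begin

definition bip_graph :: "'e set \<Rightarrow> 'v set \<Rightarrow> ('e \<times> 'v) set \<Rightarrow> bool" where
  "bip_graph E V G \<longleftrightarrow> finite E \<and> finite V \<and> G \<subseteq> E \<times> V"

definition verts :: "'e set \<Rightarrow> 'v set \<Rightarrow> ('e + 'v) set" where
  "verts E V = Inl ` E \<union> Inr ` V"

definition adj :: "('e \<times> 'v) set \<Rightarrow> ('e + 'v) \<Rightarrow> ('e + 'v) \<Rightarrow> bool" where
  "adj H x y \<longleftrightarrow> (\<exists>e v. (e, v) \<in> H \<and>
      ((x = Inl e \<and> y = Inr v) \<or> (x = Inr v \<and> y = Inl e)))"

definition walk :: "('e \<times> 'v) set \<Rightarrow> ('e + 'v) list \<Rightarrow> ('e + 'v) \<Rightarrow> ('e + 'v) \<Rightarrow> bool" where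
  "walk H p x y \<longleftrightarrow> p \<noteq> [] \<and> hd p = x \<and> last p = y \<and>
      (\<forall>i. Suc i < length p \<longrightarrow> adj H (p ! i) (p ! Suc i))"

definition path :: "('e \<times> 'v) set \<Rightarrow> ('e + 'v) list \<Rightarrow> ('e + 'v) \<Rightarrow> ('e + 'v) \<Rightarrow> bool" where
  "path H p x y \<longleftrightarrow> walk H p x y \<and> distinct p"

definition connected_bip :: "'e set \<Rightarrow> 'v set \<Rightarrow> ('e \<times> 'v) set \<Rightarrow> bool" where
  "connected_bip E V H \<longleftrightarrow> (\<forall>x \<in> verts E V. \<forall>y \<in> verts E V. \<exists>p. walk H p x y)"

definition is_tree :: "'e set \<Rightarrow> 'v set \<Rightarrow> ('e \<times> 'v) set \<Rightarrow> bool" where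
  "is_tree E V H \<longleftrightarrow> (\<forall>x \<in> verts E V. \<forall>y \<in> verts E V. \<exists>!p. path H p x y)"

definition spanning_tree :: "'e set \<Rightarrow> 'v set \<Rightarrow> ('e \<times> 'v) set \<Rightarrow> ('e \<times> 'v) set \<Rightarrow> bool" where
  "spanning_tree E V G T \<longleftrightarrow> T \<subseteq> G \<and> is_tree E V T"

definition deg :: "('e \<times> 'v) set \<Rightarrow> 'e \<Rightarrow> nat" where
  "deg T e = card {v. (e, v) \<in> T}"

definition induces :: "'e set \<Rightarrow> 'v set \<Rightarrow> ('e \<times> 'v) set \<Rightarrow> ('e \<times> 'v) set \<Rightarrow> ('e \<Rightarrow> nat) \<Rightarrow> bool" where
  "induces E V G T f \<longleftrightarrow> spanning_tree E V G T \<and> (\<forall>e \<in> E. deg T e = f e + 1)"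

definition hypertree :: "'e set \<Rightarrow> 'v set \<Rightarrow> ('e \<times> 'v) set \<Rightarrow> ('e \<Rightarrow> nat) \<Rightarrow> bool" where
  "hypertree E V G f \<longleftrightarrow> (\<exists>T. induces E V G T f)"

text \<open>x can transfer valence to y at f: decreasing f x by one (which requires
  f x \<ge> 1 for the result to be N-valued) and increasing f y by one gives a hypertree.\<close>

definition can_transfer :: "'e set \<Rightarrow> 'v set \<Rightarrow> ('e \<times> 'v) set \<Rightarrow> ('e \<Rightarrow> nat) \<Rightarrow> 'e \<Rightarrow> 'e \<Rightarrow> bool" where
  "can_transfer E V G f x y \<longleftrightarrow> 1 \<le> f x \<and> hypertree E V G (f(x := f x - 1, y := f y + 1))"

end

theory Submission
  imports Defs
begin


lemma adj_sym: "adj H x y \<Longrightarrow> adj H y x"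
  unfolding adj_def by blast

lemma adj_irrefl: "\<not> adj H x x"
  unfolding adj_def by auto

lemma adj_mono: "H \<subseteq> H' \<Longrightarrow> adj H x y \<Longrightarrow> adj H' x y"
  unfolding adj_def by blast

lemma adj_verts: "H \<subseteq> S \<times> W \<Longrightarrow> adj H x y \<Longrightarrow> x \<in> verts S W \<and> y \<in> verts S W"
  unfolding adj_def verts_def by blast

lemma adj_Inl_Inr: "adj H (Inl e) (Inr v) \<longleftrightarrow> (e, v) \<in> H"
  unfolding adj_def by auto

lemma adj_Inr_Inl: "adj H (Inr v) (Inl e) \<longleftrightarrow> (e, v) \<in> H"
  unfolding adj_def by auto

lemma adj_Inl_Inl[simp]: "\<not> adj H (Inl e) (Inl e')"
  unfolding adj_def by auto

lemma adj_Inr_Inr[simp]: "\<not> adj H (Inr e) (Inr e')"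
  unfolding adj_def by auto

lemma adj_cases:
  assumes "adj H x y"
  obtains e v where "(e, v) \<in> H" "x = Inl e" "y = Inr v"
  | e v where "(e, v) \<in> H" "x = Inr v" "y = Inl e"
  using assms unfolding adj_def by blast

lemma walk_reach: "walk H p x y \<Longrightarrow> (adj H)\<^sup>*\<^sup>* x y"
proof (induction p arbitrary: x)
  case Nil then show ?case by (simp add: walk_def)
next
  case (Cons z p)
  show ?case
  proof (cases "p = []")
    case True then show ?thesis using Cons.prems by (auto simp add: walk_def)
  next
    case False
    have "walk H p (hd p) y" using Cons.prems False unfolding walk_def
      by (auto simp: last_ConsR)
    then have r: "(adj H)\<^sup>*\<^sup>* (hd p) y" using Cons.IH by blast
    have "adj H x (hd p)" using Cons.prems False unfolding walk_def
      by (metis Suc_less_eq hd_conv_nth length_Cons length_greater_0_conv list.sel(1) nth_Cons_0 nth_Cons_Suc)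
    then show ?thesis using r by (meson converse_rtranclp_into_rtranclp)
  qed
qed

lemma walk_snoc: "walk H p x y \<Longrightarrow> adj H y z \<Longrightarrow> walk H (p @ [z]) x z"
proof -
  assume w: "walk H p x y" and a: "adj H y z"
  have ne: "p \<noteq> []" and l: "last p = y" using w by (auto simp: walk_def)
  have "adj H ((p @ [z]) ! i) ((p @ [z]) ! Suc i)" if "Suc i < length (p @ [z])" for i
  proof (cases "Suc i < length p")
    case True then show ?thesis using w by (auto simp: walk_def nth_append)
  next
    case False
    then have "i = length p - 1" using that by auto
    then show ?thesis using ne l a by (auto simp: nth_append last_conv_nth)
  qed
  then show ?thesis using w ne by (auto simp: walk_def)
qed

lemma reach_walk: "(adj H)\<^sup>*\<^sup>* x y \<Longrightarrow> \<exists>p. walk H p x y"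
proof (induction rule: rtranclp_induct)
  case base then show ?case by (rule exI[of _ "[x]"]) (simp add: walk_def)
next
  case (step y z) then show ?case using walk_snoc by blast
qed

lemma reach_sym: "(adj H)\<^sup>*\<^sup>* x y \<Longrightarrow> (adj H)\<^sup>*\<^sup>* y x"
proof (induction rule: rtranclp_induct)
  case base then show ?case by simp
next
  case (step y z) then show ?case by (meson adj_sym converse_rtranclp_into_rtranclp)
qed

lemma walk_ConsD:
  assumes "walk H (z # p) x y" "p \<noteq> []"
  shows "z = x \<and> walk H p (hd p) y \<and> adj H x (hd p)"
proof -
  have "walk H p (hd p) y" using assms unfolding walk_def
    by (auto simp: last_ConsR)
  moreover have "adj H x (hd p)" using assms unfolding walk_def
    by (metis Suc_less_eq hd_conv_nth length_Cons length_greater_0_conv list.sel(1) nth_Cons_0 nth_Cons_Suc)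
  ultimately show ?thesis using assms by (simp add: walk_def)
qed

lemma walk_Cons:
  assumes "walk H p y z" "adj H x y"
  shows "walk H (x # p) x z"
proof -
  have ne: "p \<noteq> []" "hd p = y" using assms by (auto simp: walk_def)
  have "adj H ((x # p) ! i) ((x # p) ! Suc i)" if "Suc i < length (x # p)" for i
  proof (cases i)
    case 0 then show ?thesis using ne assms by (simp add: hd_conv_nth)
  next
    case (Suc k) then show ?thesis using that assms by (auto simp: walk_def)
  qed
  then show ?thesis using assms ne by (auto simp: walk_def)
qed

lemma path_Cons:
  assumes "path H p y z" "adj H x y" "x \<notin> set p"
  shows "path H (x # p) x z"
  using assms walk_Cons by (auto simp: path_def)

lemma walk_single[simp]: "walk H [x] y z \<longleftrightarrow> y = x \<and> z = x"
  by (auto simp: walk_def)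

lemma path_single[simp]: "path H [x] y z \<longleftrightarrow> y = x \<and> z = x"
  by (auto simp: path_def)

lemma walk_take:
  assumes "walk H p x y" "j < length p"
  shows "walk H (take (Suc j) p) x (p ! j)"
proof -
  have "length p \<le> Suc j \<Longrightarrow> length p - Suc 0 = j" using assms(2) by auto
  then show ?thesis using assms unfolding walk_def
    by (auto simp: last_conv_nth hd_conv_nth min_def)
qed

lemma path_take:
  assumes "path H p x y" "j < length p"
  shows "path H (take (Suc j) p) x (p ! j)"
  using assms walk_take by (auto simp: path_def)

lemma walk_drop:
  assumes "walk H p x y" "j < length p"
  shows "walk H (drop j p) (p ! j) y"
  using assms unfolding walk_def
  by (auto simp: hd_drop_conv_nth)

lemma path_drop:
  assumes "path H p x y" "j < length p"
  shows "path H (drop j p) (p ! j) y"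
  using assms walk_drop by (auto simp: path_def)

lemma path_snoc:
  assumes "path H p x y" "adj H y z" "z \<notin> set p"
  shows "path H (p @ [z]) x z"
  using assms walk_snoc by (auto simp: path_def)

lemma walk_rev:
  assumes "walk H p x y"
  shows "walk H (rev p) y x"
proof -
  have ne: "p \<noteq> []" using assms by (auto simp: walk_def)
  have "adj H (rev p ! i) (rev p ! Suc i)" if "Suc i < length p" for i
  proof -
    have "adj H (p ! (length p - Suc (Suc i))) (p ! Suc (length p - Suc (Suc i)))"
      using assms that unfolding walk_def by auto
    moreover have "Suc (length p - Suc (Suc i)) = length p - Suc i" using that by auto
    ultimately show ?thesis using that by (auto simp: rev_nth intro: adj_sym)
  qed
  then show ?thesis using assms ne by (auto simp: walk_def hd_rev last_rev)
qed

lemma path_rev: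
  assumes "path H p x y"
  shows "path H (rev p) y x"
  using assms walk_rev by (auto simp: path_def)

lemma walk_path:
  "walk H p x y \<Longrightarrow> \<exists>q. path H q x y \<and> set q \<subseteq> set p"
proof (induction p arbitrary: x)
  case Nil then show ?case by (simp add: walk_def)
next
  case (Cons z p)
  show ?case
  proof (cases "p = []")
    case True then show ?thesis using Cons.prems by (auto simp: walk_def path_def)
  next
    case False
    from walk_ConsD[OF Cons.prems False] have zx: "z = x" and w: "walk H p (hd p) y"
      and a: "adj H x (hd p)" by auto
    obtain q where q: "path H q (hd p) y" "set q \<subseteq> set p" using Cons.IH w by blast
    show ?thesis
    proof (cases "x \<in> set q")
      case True
      then obtain j where j: "j < length q" "q ! j = x" by (meson in_set_conv_nth)
      have "path H (drop j q) x y" using path_drop[OF q(1) j(1)] j by simp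
      moreover have "set (drop j q) \<subseteq> set (z # p)" using q(2) set_drop_subset by fastforce
      ultimately show ?thesis by blast
    next
      case False
      have "hd q = hd p" using q by (simp add: path_def walk_def)
      then have "path H (x # q) x y" using path_Cons[OF q(1) a False] by simp
      then show ?thesis using q(2) zx by (intro exI[of _ "x#q"]) auto
    qed
  qed
qed

lemma walk_mono: "walk H p x y \<Longrightarrow> H \<subseteq> H' \<Longrightarrow> walk H' p x y"
  unfolding walk_def using adj_mono by blast

lemma path_mono: "path H p x y \<Longrightarrow> H \<subseteq> H' \<Longrightarrow> path H' p x y"
  unfolding path_def using walk_mono by blast

lemma walk_verts:
  assumes "walk H p x y" "H \<subseteq> S \<times> W" "x \<in> verts S W"
  shows "set p \<subseteq> verts S W"
proof
  fix z assume "z \<in> set p"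
  then obtain i where i: "i < length p" "p ! i = z" by (meson in_set_conv_nth)
  show "z \<in> verts S W"
  proof (cases i)
    case 0 then show ?thesis using assms i by (auto simp: walk_def hd_conv_nth)
  next
    case (Suc k)
    then have "adj H (p ! k) (p ! i)" using assms i by (auto simp: walk_def)
    then show ?thesis using adj_verts[OF assms(2)] i by blast
  qed
qed



definition joins :: "('e \<times> 'v) \<Rightarrow> ('e + 'v) \<Rightarrow> ('e + 'v) \<Rightarrow> bool" where
  "joins g u w \<longleftrightarrow> (u = Inl (fst g) \<and> w = Inr (snd g)) \<or> (u = Inr (snd g) \<and> w = Inl (fst g))"

lemma adj_joins: "adj H u w \<longleftrightarrow> (\<exists>g\<in>H. joins g u w)"
  unfolding adj_def joins_def by force

lemma joins_unique: "joins g x a \<Longrightarrow> joins g x b \<Longrightarrow> a = b"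
  unfolding joins_def by auto

lemma joins_cases: "joins g u w \<Longrightarrow> joins g x a \<Longrightarrow> (u = x \<and> w = a) \<or> (u = a \<and> w = x)"
  unfolding joins_def by auto

lemma joins_sym: "joins g u w \<Longrightarrow> joins g w u"
  unfolding joins_def by auto

definition forest :: "('e \<times> 'v) set \<Rightarrow> bool" where
  "forest H \<longleftrightarrow> (\<forall>p q x y. path H p x y \<longrightarrow> path H q x y \<longrightarrow> p = q)"

lemma forest_mono: "H \<subseteq> H' \<Longrightarrow> forest H' \<Longrightarrow> forest H"
  unfolding forest_def using path_mono by blast

lemma card_verts: "finite S \<Longrightarrow> finite W \<Longrightarrow> card (verts S W) = card S + card W"
  unfolding verts_def
  by (subst card_Un_disjoint) (auto simp: card_image)

lemma finite_verts: "finite S \<Longrightarrow> finite W \<Longrightarrow> finite (verts S W)"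
  unfolding verts_def by auto

lemma reach_lift:
  assumes "(adj H)\<^sup>*\<^sup>* a b" "\<forall>u w. adj H u w \<longrightarrow> (adj H')\<^sup>*\<^sup>* u w"
  shows "(adj H')\<^sup>*\<^sup>* a b"
  using assms(1)
proof (induction rule: rtranclp_induct)
  case base then show ?case by simp
next
  case (step y z) then show ?case using assms(2) by (meson rtranclp_trans)
qed

lemma conn_card_lower:
  assumes fin: "finite S" "finite W" and FS: "F \<subseteq> S \<times> W" and r: "r \<in> verts S W"
    and conn: "\<forall>x\<in>verts S W. (adj F)\<^sup>*\<^sup>* r x"
  shows "card S + card W \<le> card F + 1"
proof -
  define X where "X = verts S W"
  define dist where "dist x = (LEAST n. \<exists>p. walk F p r x \<and> length p = n)" for x
  have finF: "finite F" using fin FS finite_subset by blast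
  have ex: "\<exists>g\<in>F. \<exists>y. dist y < dist x \<and> joins g y x" if x: "x \<in> X - {r}" for x
  proof -
    obtain p0 where "walk F p0 r x" using conn x reach_walk unfolding X_def by blast
    then have "\<exists>n p. walk F p r x \<and> length p = n" by blast
    then have "\<exists>p. walk F p r x \<and> length p = dist x"
      unfolding dist_def by (rule LeastI_ex)
    then obtain p where p: "walk F p r x" "length p = dist x" by blast
    have ne: "p \<noteq> []" using p by (simp add: walk_def)
    have "length p \<noteq> 1"
    proof
      assume "length p = 1"
      then have "hd p = last p" by (metis One_nat_def hd_conv_nth last_conv_nth ne diff_Suc_1)
      then show False using p x by (auto simp add: walk_def)
    qed
    then have l2: "length p \<ge> 2" using ne by (cases p) (auto simp: Suc_le_eq)
    define k where "k = length p - 2"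
    have k: "k < length p" "Suc k < length p" using l2 by (auto simp: k_def)
    have "walk F (take (Suc k) p) r (p ! k)" using walk_take[OF p(1) k(1)] .
    then have "dist (p ! k) \<le> Suc k" unfolding dist_def
      using k by (intro Least_le) (rule exI[of _ "take (Suc k) p"], simp add: min_def)
    then have d: "dist (p ! k) < dist x" using p(2) l2 by (simp add: k_def)
    have "adj F (p ! k) (p ! Suc k)" using p(1) k by (simp add: walk_def)
    moreover have "p ! Suc k = x" using p(1) l2 ne
      by (simp add: walk_def k_def last_conv_nth Suc_diff_Suc numeral_2_eq_2)
    ultimately have "adj F (p ! k) x" by simp
    then show ?thesis using d unfolding adj_joins by blast
  qed
  define \<phi> where "\<phi> x = (SOME g. g \<in> F \<and> (\<exists>y. dist y < dist x \<and> joins g y x))" for x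
  have phi: "\<phi> x \<in> F \<and> (\<exists>y. dist y < dist x \<and> joins (\<phi> x) y x)" if "x \<in> X - {r}" for x
    using someI_ex[OF ex[OF that, unfolded Bex_def]] unfolding \<phi>_def by blast
  have inj: "inj_on \<phi> (X - {r})"
  proof (rule inj_onI)
    fix x x' assume xx: "x \<in> X - {r}" "x' \<in> X - {r}" "\<phi> x = \<phi> x'"
    obtain y where y: "dist y < dist x" "joins (\<phi> x) y x" using phi xx(1) by blast
    obtain y' where y': "dist y' < dist x'" "joins (\<phi> x) y' x'" using phi xx(2) xx(3) by metis
    from joins_cases[OF y'(2) joins_sym[OF y(2)]]
    show "x = x'" using y y' by auto
  qed
  have "\<phi> ` (X - {r}) \<subseteq> F" using phi by blast
  then have "card (X - {r}) \<le> card F" using card_inj_on_le[OF inj _ finF] by blast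
  moreover have "card X = card (X - {r}) + 1" using r fin finite_verts unfolding X_def
    by (metis card_Suc_Diff1 Suc_eq_plus1)
  ultimately show ?thesis using card_verts[OF fin] unfolding X_def by simp
qed

lemma path_verts_len:
  assumes "path F p x y" "length p \<ge> 2" "F \<subseteq> S \<times> W"
  shows "set p \<subseteq> verts S W"
proof -
  have "p \<noteq> []" "tl p \<noteq> []" using assms(2) by (cases p; auto)+
  then obtain z p' where pz: "p = z # p'" "p' \<noteq> []" by (cases p) auto
  have "adj F x (hd p')" using walk_ConsD[of F z p' x y] assms(1) pz by (auto simp: path_def)
  then have "x \<in> verts S W" using adj_verts[OF assms(3)] by blast
  then show ?thesis using walk_verts[OF _ assms(3)] assms(1) by (auto simp: path_def)
qed

lemma forest_leaf:
  assumes fin: "finite F" and ne: "F \<noteq> {}" and fo: "forest F"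
  shows "\<exists>l u. adj F l u \<and> (\<forall>u'. adj F l u' \<longrightarrow> u' = u)"
proof -
  define X0 where "X0 = verts (Domain F) (Range F)"
  have FX: "F \<subseteq> Domain F \<times> Range F" by auto
  have finX: "finite X0" unfolding X0_def using fin
    by (simp add: finite_verts finite_Domain finite_Range)
  have bound: "length p < card X0 + 2" if "\<exists>x y. path F p x y" for p
  proof (cases "length p \<ge> 2")
    case True
    then have "set p \<subseteq> X0" using that path_verts_len[OF _ True FX] unfolding X0_def by blast
    moreover have "distinct p" using that by (auto simp: path_def)
    ultimately have "length p \<le> card X0" using finX
      by (metis card_mono distinct_card)
    then show ?thesis by simp
  qed simp
  obtain e v where ev: "(e, v) \<in> F" using ne by auto
  have "path F [Inl e, Inr v] (Inl e) (Inr v)"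
    using path_Cons[of F "[Inr v]" "Inr v" "Inr v" "Inl e"] ev by (simp add: adj_Inl_Inr)
  then have P0: "\<exists>x y. path F [Inl e, Inr v] x y" by blast
  obtain p where p: "\<exists>x y. path F p x y" and pmax: "\<forall>q. (\<exists>x y. path F q x y) \<longrightarrow> length q \<le> length p"
    using Lattices_Big.ex_has_greatest_nat[of "\<lambda>p. \<exists>x y. path F p x y", OF P0, of length "card X0 + 2"]
      bound by blast
  then obtain x y where pxy: "path F p x y" by blast
  have l2: "length p \<ge> 2" using pmax P0 by fastforce
  have hx: "p ! 0 = x" using pxy l2 by (auto simp: path_def walk_def hd_conv_nth)
  have a1: "adj F x (p ! 1)" using pxy l2 hx by (auto simp: path_def walk_def)
  have "adj F x u' \<Longrightarrow> u' = p ! 1" for u'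
  proof (rule ccontr)
    assume a: "adj F x u'" and nu: "u' \<noteq> p ! 1"
    show False
    proof (cases "u' \<in> set p")
      case False
      have "path F (u' # p) u' y" using path_Cons[OF pxy adj_sym[OF a] False] .
      then show False using pmax by fastforce
    next
      case True
      then obtain j where j: "j < length p" "p ! j = u'" by (meson in_set_conv_nth)
      have "j \<noteq> 0" using j hx a adj_irrefl by metis
      moreover have "j \<noteq> 1" using nu j by auto
      ultimately have j2: "j \<ge> 2" by arith
      have q1: "path F (take (Suc j) p) x u'" using path_take[OF pxy j(1)] j by simp
      have "x \<noteq> u'" using a adj_irrefl by metis
      then have q2: "path F [x, u'] x u'" using path_Cons[of F "[u']" u' u' x] a by simp
      have "take (Suc j) p = [x, u']" using fo q1 q2 unfolding forest_def by blast
      moreover have "length (take (Suc j) p) = Suc j" using j by simp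
      ultimately show False using j2 by simp
    qed
  qed
  then show ?thesis using a1 by blast
qed

lemma forest_card:
  assumes "finite S" "finite W" "F \<subseteq> S \<times> W" "forest F" "S \<noteq> {} \<or> W \<noteq> {}"
  shows "card F + 1 \<le> card S + card W"
  using assms
proof (induction "card F" arbitrary: F S W rule: less_induct)
  case less
  have finF: "finite F" using less.prems finite_subset by blast
  show ?case
  proof (cases "F = {}")
    case True then show ?thesis using less.prems by (auto simp: card_gt_0_iff Suc_le_eq)
  next
    case False
    obtain l u where lu: "adj F l u" "\<forall>u'. adj F l u' \<longrightarrow> u' = u"
      using forest_leaf[OF finF False less.prems(4)] by blast
    from lu(1) show ?thesis
    proof (cases rule: adj_cases)
      case (1 e0 v0)
      define F' where "F' = F - {(e0, v0)}"
      have F'sub: "F' \<subseteq> (S - {e0}) \<times> W"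
      proof
        fix g assume g: "g \<in> F'"
        obtain e v where gv: "g = (e, v)" by (cases g)
        have "e \<noteq> e0"
        proof
          assume "e = e0"
          then have "adj F l (Inr v)" using g gv 1 by (auto simp: F'_def adj_Inl_Inr)
          then show False using lu(2) g gv 1 \<open>e = e0\<close> unfolding F'_def by auto
        qed
        then show "g \<in> (S - {e0}) \<times> W" using g gv less.prems(3) unfolding F'_def by auto
      qed
      have cF: "card F' < card F" unfolding F'_def by (rule card_Diff1_less[OF finF 1(1)])
      have "card F' + 1 \<le> card (S - {e0}) + card W"
        using less.hyps[OF cF] F'sub less.prems 1 forest_mono[of F' F]
        by (auto simp: F'_def)
      moreover have "e0 \<in> S" using 1 less.prems(3) by auto
      moreover have "card S > 0" using \<open>e0 \<in> S\<close> less.prems(1) card_gt_0_iff by blast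
      ultimately show ?thesis using cF less.prems(1) 1 finF
        by (simp add: F'_def card_Diff_singleton)
    next
      case (2 e0 v0)
      define F' where "F' = F - {(e0, v0)}"
      have F'sub: "F' \<subseteq> S \<times> (W - {v0})"
      proof
        fix g assume g: "g \<in> F'"
        obtain e v where gv: "g = (e, v)" by (cases g)
        have "v \<noteq> v0"
        proof
          assume "v = v0"
          then have "adj F l (Inl e)" using g gv 2 by (auto simp: F'_def adj_Inr_Inl)
          then show False using lu(2) g gv 2 \<open>v = v0\<close> unfolding F'_def by auto
        qed
        then show "g \<in> S \<times> (W - {v0})" using g gv less.prems(3) unfolding F'_def by auto
      qed
      have cF: "card F' < card F" unfolding F'_def by (rule card_Diff1_less[OF finF 2(1)])
      have "card F' + 1 \<le> card S + card (W - {v0})"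
        using less.hyps[OF cF] F'sub less.prems 2 forest_mono[of F' F]
        by (auto simp: F'_def)
      moreover have "v0 \<in> W" using 2 less.prems(3) by auto
      moreover have "card W > 0" using \<open>v0 \<in> W\<close> less.prems(2) card_gt_0_iff by blast
      ultimately show ?thesis using cF less.prems(2) 2 finF
        by (simp add: F'_def card_Diff_singleton)
    qed
  qed
qed



lemma path_loop: "path H q x x \<Longrightarrow> q = [x]"
  by (cases q) (auto simp: path_def walk_def last_ConsR split: if_splits)

lemma adj_avoid:
  assumes "adj F u w" "u \<noteq> x" "w \<noteq> x" "joins g x z"
  shows "adj (F - {g}) u w"
proof -
  obtain g' where g': "g' \<in> F" "joins g' u w" using assms(1) adj_joins by metis
  have "g' \<noteq> g" using joins_cases[of g' u w x z] g' assms by auto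
  then show ?thesis using g' adj_joins by fastforce
qed

lemma walk_avoid:
  assumes "walk F p u v" "x \<notin> set p" "joins g x z"
  shows "walk (F - {g}) p u v"
  using assms adj_avoid unfolding walk_def by (metis Suc_lessD nth_mem)

lemma not_forest_removable:
  "path F p x y \<Longrightarrow> path F q x y \<Longrightarrow> p \<noteq> q \<Longrightarrow>
   \<exists>g\<in>F. \<forall>u w. adj F u w \<longrightarrow> (adj (F - {g}))\<^sup>*\<^sup>* u w"
proof (induction p arbitrary: q x)
  case Nil then show ?case by (simp add: path_def walk_def)
next
  case (Cons z p')
  obtain z' q' where q: "q = z' # q'" using Cons.prems(2) by (cases q) (auto simp: path_def walk_def)
  have zx: "z = x" "z' = x" using Cons.prems q by (auto simp: path_def walk_def)
  show ?case
  proof (cases "p' = [] \<or> q' = []")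
    case True
    then have "x = y" using Cons.prems q zx by (auto simp: path_def walk_def)
    then show ?thesis using Cons.prems path_loop by metis
  next
    case False
    then have ne: "p' \<noteq> []" "q' \<noteq> []" by auto
    have wp: "walk F p' (hd p') y" "adj F x (hd p')"
      using walk_ConsD[of F z p' x y] Cons.prems(1) ne by (auto simp: path_def)
    have wq: "walk F q' (hd q') y" "adj F x (hd q')"
      using walk_ConsD[of F z' q' x y] Cons.prems(2) ne q by (auto simp: path_def)
    have dp: "distinct p'" "x \<notin> set p'" using Cons.prems(1) zx by (auto simp: path_def)
    have dq: "distinct q'" "x \<notin> set q'" using Cons.prems(2) zx q by (auto simp: path_def)
    show ?thesis
    proof (cases "hd p' = hd q'")
      case True
      then have "path F p' (hd p') y" "path F q' (hd p') y" "p' \<noteq> q'"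
        using wp wq dp dq Cons.prems(3) q zx by (auto simp: path_def)
      then show ?thesis using Cons.IH by blast
    next
      case False
      obtain g where g: "g \<in> F" "joins g x (hd p')" using wp(2) adj_joins by metis
      have "g \<noteq> g'" if "joins g' x (hd q')" for g'
        using that g joins_unique False by metis
      then have a1: "adj (F - {g}) x (hd q')" using wq(2) adj_joins by (metis DiffI singletonD)
      have "walk (F - {g}) q' (hd q') y" using walk_avoid[OF wq(1) dq(2) g(2)] .
      then have r1: "(adj (F - {g}))\<^sup>*\<^sup>* (hd q') y" by (rule walk_reach)
      have "walk (F - {g}) p' (hd p') y" using walk_avoid[OF wp(1) dp(2) g(2)] .
      then have r2: "(adj (F - {g}))\<^sup>*\<^sup>* y (hd p')" by (rule reach_sym[OF walk_reach])
      have key: "(adj (F - {g}))\<^sup>*\<^sup>* x (hd p')"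
        using a1 r1 r2 by (meson converse_rtranclp_into_rtranclp rtranclp_trans)
      have "(adj (F - {g}))\<^sup>*\<^sup>* u w" if uw: "adj F u w" for u w
      proof -
        obtain g' where g': "g' \<in> F" "joins g' u w" using uw adj_joins by metis
        show ?thesis
        proof (cases "g' = g")
          case True
          then have "(u = x \<and> w = hd p') \<or> (u = hd p' \<and> w = x)"
            using joins_cases g g' by metis
          then show ?thesis using key reach_sym by metis
        next
          case False
          then have "adj (F - {g}) u w" using g' adj_joins by fastforce
          then show ?thesis by simp
        qed
      qed
      then show ?thesis using g(1) by blast
    qed
  qed
qed

lemma path_outside:
  assumes "path T p x y" "T \<subseteq> S \<times> W" "x \<notin> verts S W"
  shows "p = [x]"
proof (cases p)
  case Nil then show ?thesis using assms by (simp add: path_def walk_def)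
next
  case (Cons z p')
  show ?thesis
  proof (cases "p' = []")
    case True then show ?thesis using assms Cons by (auto simp: path_def walk_def)
  next
    case False
    then have "adj T x (hd p')" using walk_ConsD[of T z p' x y] assms(1) Cons by (auto simp: path_def)
    then show ?thesis using adj_verts[OF assms(2)] assms(3) by blast
  qed
qed

lemma tree_forest:
  assumes "is_tree S W T" "T \<subseteq> S \<times> W"
  shows "forest T"
  unfolding forest_def
proof (intro allI impI)
  fix p q x y assume pq: "path T p x y" "path T q x y"
  show "p = q"
  proof (cases "x \<in> verts S W \<and> y \<in> verts S W")
    case True then show ?thesis using assms(1) pq unfolding is_tree_def by blast
  next
    case False
    then consider "x \<notin> verts S W" | "y \<notin> verts S W" by blast
    then show ?thesis
    proof cases
      case 1
      then show ?thesis using path_outside[OF pq(1) assms(2)] path_outside[OF pq(2) assms(2)] by simp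
    next
      case 2
      then have "rev p = [y]" "rev q = [y]"
        using path_outside[OF path_rev[OF pq(1)] assms(2)] path_outside[OF path_rev[OF pq(2)] assms(2)]
        by auto
      then show ?thesis by (metis rev_rev_ident)
    qed
  qed
qed

lemma tree_card:
  assumes fin: "finite S" "finite W" and T: "T \<subseteq> S \<times> W" "is_tree S W T" and ne: "S \<noteq> {}"
  shows "card T + 1 = card S + card W"
proof -
  have "card T + 1 \<le> card S + card W"
    using forest_card[OF fin T(1) tree_forest[OF T(2,1)]] ne by blast
  moreover obtain e where e: "e \<in> S" using ne by blast
  have "Inl e \<in> verts S W" using e by (simp add: verts_def)
  moreover have "\<forall>x\<in>verts S W. (adj T)\<^sup>*\<^sup>* (Inl e) x"
    using T(2) \<open>Inl e \<in> verts S W\<close> unfolding is_tree_def path_def by (meson walk_reach)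
  ultimately show ?thesis using conn_card_lower[OF fin T(1)] by fastforce
qed

lemma tree_char:
  assumes fin: "finite S" "finite W" and T: "T \<subseteq> S \<times> W" and r: "r \<in> verts S W"
    and conn: "\<forall>x\<in>verts S W. (adj T)\<^sup>*\<^sup>* r x" and c: "card T + 1 = card S + card W"
  shows "is_tree S W T"
proof -
  have fo: "forest T"
  proof (rule ccontr)
    assume "\<not> forest T"
    then obtain p q x y where "path T p x y" "path T q x y" "p \<noteq> q" unfolding forest_def by blast
    then obtain g where g: "g \<in> T" "\<forall>u w. adj T u w \<longrightarrow> (adj (T - {g}))\<^sup>*\<^sup>* u w"
      using not_forest_removable by metis
    have "\<forall>x\<in>verts S W. (adj (T - {g}))\<^sup>*\<^sup>* r x" using conn g(2) reach_lift by metis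
    then have "card S + card W \<le> card (T - {g}) + 1"
      using conn_card_lower[OF fin _ r] T by blast
    moreover have "finite T" using fin T finite_subset by blast
    moreover have "card T > 0" using g(1) \<open>finite T\<close> card_gt_0_iff by blast
    ultimately show False using c g(1) by (simp add: card_Diff_singleton)
  qed
  show ?thesis unfolding is_tree_def
  proof (intro ballI)
    fix x y assume xy: "x \<in> verts S W" "y \<in> verts S W"
    have "(adj T)\<^sup>*\<^sup>* x y" using conn xy reach_sym by (meson rtranclp_trans)
    then obtain p where "path T p x y" using reach_walk walk_path by metis
    then show "\<exists>!p. path T p x y" using fo unfolding forest_def by blast
  qed
qed



definition Dset :: "'e \<Rightarrow> ('e \<times> 'v) set \<Rightarrow> 'e \<Rightarrow> ('e + 'v) set" where
  "Dset a T e = {x. \<exists>p. path T p (Inl a) x \<and> Inl e \<notin> set p}"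

lemma deg_finite: "T \<subseteq> E \<times> V \<Longrightarrow> finite V \<Longrightarrow> finite {v. (x, v) \<in> T}"
  by (rule finite_subset[of _ V]) auto

lemma sum_deg: 
  assumes "T \<subseteq> E \<times> V" "finite V" "finite S"
  shows "card (T \<inter> (S \<times> UNIV)) = (\<Sum>x\<in>S. deg T x)"
proof -
  have "T \<inter> (S \<times> UNIV) = Sigma S (\<lambda>x. {v. (x, v) \<in> T})" by auto
  then show ?thesis unfolding deg_def
    using card_SigmaI[OF assms(3), of "\<lambda>x. {v. (x, v) \<in> T}"] deg_finite[OF assms(1,2)] by simp
qed

lemma path_last_in: "path T p x y \<Longrightarrow> y \<in> set p"
  by (auto simp: path_def walk_def)

lemma path_hd_in: "path T p x y \<Longrightarrow> x \<in> set p"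
  by (auto simp: path_def walk_def)

lemma step:
  assumes fin: "finite E" "finite V" and GS: "G \<subseteq> E \<times> V"
    and T': "spanning_tree E V G T'"
    and T'deg: "\<forall>x\<in>E. x \<noteq> c \<longrightarrow> deg T' x = f x + 1 + (if x = a then 1 else 0)"
    and aE: "a \<in> E"
    and T: "spanning_tree E V G T" and eE: "e \<in> E" and ea: "e \<noteq> a"
    and Tdeg: "\<forall>x\<in>E. deg T x + (if x = b then 1 else 0) = f x + 1 + (if x = e then 1 else 0)"
    and bD: "Inl b \<notin> Dset a T e" and cD: "Inl c \<notin> Dset a T e"
  shows "\<exists>T'' e2. spanning_tree E V G T'' \<and> e2 \<in> E \<and>
     (\<forall>x\<in>E. deg T'' x + (if x = b then 1 else 0) = f x + 1 + (if x = e2 then 1 else 0)) \<and>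
     Dset a T'' e2 \<subset> Dset a T e"
proof -
  define D where "D = Dset a T e"
  have TS: "T \<subseteq> E \<times> V" and Ttree: "is_tree E V T" using T GS by (auto simp: spanning_tree_def)
  have T'S: "T' \<subseteq> E \<times> V" and T'tree: "is_tree E V T'" using T' GS by (auto simp: spanning_tree_def)
  have finT: "finite T" using TS fin finite_subset by blast
  have aV: "Inl a \<in> verts E V" using aE by (simp add: verts_def)
  have Da: "Inl a \<in> D" unfolding D_def Dset_def using ea by (intro CollectI exI[of _ "[Inl a]"]) auto
  have De: "Inl e \<notin> D" unfolding D_def Dset_def using path_last_in by fastforce
  have Dsub: "D \<subseteq> verts E V"
  proof
    fix x assume "x \<in> D"
    then obtain p where p: "path T p (Inl a) x" unfolding D_def Dset_def by blast
    then have "set p \<subseteq> verts E V" using walk_verts[OF _ TS aV] by (auto simp: path_def)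
    then show "x \<in> verts E V" using path_last_in[OF p] by blast
  qed
  have finD: "finite D" using Dsub finite_verts[OF fin] finite_subset by blast
  have Dcl: "y \<in> D" if x: "x \<in> D" and xy: "adj T x y" and ye: "y \<noteq> Inl e" for x y
  proof -
    obtain p where p: "path T p (Inl a) x" "Inl e \<notin> set p" using x unfolding D_def Dset_def by blast
    show ?thesis
    proof (cases "y \<in> set p")
      case True
      then obtain j where j: "j < length p" "p ! j = y" by (meson in_set_conv_nth)
      have "path T (take (Suc j) p) (Inl a) y" using path_take[OF p(1) j(1)] j by simp
      moreover have "Inl e \<notin> set (take (Suc j) p)" using p(2) set_take_subset by fastforce
      ultimately show ?thesis unfolding D_def Dset_def by blast
    next
      case False
      have "path T (p @ [y]) (Inl a) y" using path_snoc[OF p(1) xy False] .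
      moreover have "Inl e \<notin> set (p @ [y])" using p(2) ye by simp
      ultimately show ?thesis unfolding D_def Dset_def by blast
    qed
  qed
  define SD where "SD = {x. Inl x \<in> D}"
  define WD where "WD = {v. Inr v \<in> D}"
  define FD where "FD = T \<inter> (SD \<times> WD)"
  have SDE: "SD \<subseteq> E" and WDV: "WD \<subseteq> V" using Dsub by (auto simp: SD_def WD_def verts_def)
  have finSD: "finite SD" and finWD: "finite WD"
    using SDE WDV fin finite_subset by blast+
  have Dverts: "verts SD WD = D"
    using Dsub unfolding verts_def SD_def WD_def by auto
  have cardD: "card D = card SD + card WD" using card_verts[OF finSD finWD] Dverts by simp
  have aSD: "a \<in> SD" using Da by (simp add: SD_def)
  have adjD: "adj FD u w" if "adj T u w" "u \<in> D" "w \<in> D" for u w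
    using that by (cases rule: adj_cases) (auto simp: FD_def SD_def WD_def adj_Inl_Inr adj_Inr_Inl)
  have Dreach: "(adj FD)\<^sup>*\<^sup>* (Inl a) x" if x: "x \<in> D" for x
  proof -
    obtain p where p: "path T p (Inl a) x" "Inl e \<notin> set p" using x unfolding D_def Dset_def by blast
    have pD: "p ! i \<in> D" if "i < length p" for i
    proof -
      have "path T (take (Suc i) p) (Inl a) (p ! i)" using path_take[OF p(1) that] .
      moreover have "Inl e \<notin> set (take (Suc i) p)" using p(2) set_take_subset by fastforce
      ultimately show ?thesis unfolding D_def Dset_def by blast
    qed
    have "walk FD p (Inl a) x" using p(1) pD adjD unfolding path_def walk_def
      by (meson Suc_lessD)
    then show ?thesis by (rule walk_reach)
  qed
  have TSD: "T \<inter> (SD \<times> UNIV) = FD"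
  proof
    show "T \<inter> (SD \<times> UNIV) \<subseteq> FD"
    proof
      fix g assume g: "g \<in> T \<inter> (SD \<times> UNIV)"
      obtain x v where gv: "g = (x, v)" by (cases g)
      have "adj T (Inl x) (Inr v)" using g gv by (simp add: adj_Inl_Inr)
      then have "Inr v \<in> D" using Dcl g gv by (auto simp: SD_def)
      then show "g \<in> FD" using g gv by (auto simp: FD_def WD_def)
    qed
  qed (auto simp: FD_def)
  have sumT: "card FD = (\<Sum>x\<in>SD. deg T x)" using sum_deg[OF TS fin(2) finSD] TSD by simp
  have sumT': "card (T' \<inter> (SD \<times> UNIV)) = (\<Sum>x\<in>SD. deg T' x)" using sum_deg[OF T'S fin(2) finSD] .
  have degs: "deg T' x = deg T x + (if x = a then 1 else 0)" if x: "x \<in> SD" for x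
  proof -
    have "x \<noteq> b" "x \<noteq> c" "x \<noteq> e" "x \<in> E" using x bD cD De SDE by (auto simp: SD_def D_def)
    then show ?thesis using T'deg Tdeg by auto
  qed
  have sumrel: "(\<Sum>x\<in>SD. deg T' x) = (\<Sum>x\<in>SD. deg T x) + 1"
    using degs aSD finSD by (simp add: sum.distrib)
  have lower: "card D \<le> card FD + 1"
    using conn_card_lower[OF finSD finWD _ _ ] Dreach Da Dverts cardD unfolding FD_def
    by (metis FD_def inf_le2)
  have "\<exists>e2 v2. (e2, v2) \<in> T' \<and> e2 \<in> SD \<and> Inr v2 \<notin> D"
  proof (rule ccontr)
    assume "\<not> ?thesis"
    then have sub: "T' \<inter> (SD \<times> UNIV) \<subseteq> SD \<times> WD" by (auto simp: WD_def)
    have "forest (T' \<inter> (SD \<times> UNIV))"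
      using forest_mono[OF _ tree_forest[OF T'tree T'S]] by blast
    then have "card (T' \<inter> (SD \<times> UNIV)) + 1 \<le> card SD + card WD"
      using forest_card[OF finSD finWD sub] aSD by blast
    then show False using sumT' sumrel sumT lower cardD by linarith
  qed
  then obtain e2 v2 where ev2: "(e2, v2) \<in> T'" "e2 \<in> SD" "Inr v2 \<notin> D" by blast
  have e2E: "e2 \<in> E" and v2V: "v2 \<in> V" using ev2 T'S by auto
  have e2T: "(e2, v2) \<notin> T"
  proof
    assume "(e2, v2) \<in> T"
    then have "adj T (Inl e2) (Inr v2)" by (simp add: adj_Inl_Inr)
    then show False using Dcl ev2 by (auto simp: SD_def)
  qed
  have e2e: "e2 \<noteq> e" using ev2(2) De by (auto simp: SD_def)
  have v2verts: "Inr v2 \<in> verts E V" using v2V by (simp add: verts_def)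
  obtain p where p: "path T p (Inl a) (Inr v2)" using Ttree aV v2verts unfolding is_tree_def by blast
  have "Inl e \<in> set p" using p ev2(3) unfolding D_def Dset_def by blast
  then obtain i where i: "i < length p" "p ! i = Inl e" by (meson in_set_conv_nth)
  have p0: "p ! 0 = Inl a" using p by (auto simp: path_def walk_def hd_conv_nth)
  have i0: "i \<noteq> 0" using p0 i(2) ea by (metis Inl_inject)
  have dp: "distinct p" using p by (simp add: path_def)
  have adjprev: "adj T (p ! (i - 1)) (Inl e)" using p i i0 unfolding path_def walk_def
    by (metis Suc_pred' bot_nat_0.not_eq_extremum)
  then obtain w where w: "p ! (i - 1) = Inr w" "(e, w) \<in> T"
    by (cases rule: adj_cases) auto
  have wD: "Inr w \<in> D"
  proof -
    have "path T (take (Suc (i - 1)) p) (Inl a) (p ! (i - 1))" using path_take[OF p] i by simp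
    moreover have "Inl e \<notin> set (take (Suc (i - 1)) p)"
    proof
      assume "Inl e \<in> set (take (Suc (i - 1)) p)"
      then obtain k where "k < length (take (Suc (i - 1)) p)" "take (Suc (i - 1)) p ! k = Inl e"
        by (meson in_set_conv_nth)
      then have k: "k < i" "p ! k = Inl e" using i0 by auto
      then show False using nth_eq_iff_index_eq[OF dp, of k i] i by simp
    qed
    ultimately show ?thesis using w unfolding D_def Dset_def by auto
  qed
  have wuniq: "w' = w" if ww: "(e, w') \<in> T" "Inr w' \<in> D" for w'
  proof -
    obtain q where q: "path T q (Inl a) (Inr w)" "Inl e \<notin> set q" using wD unfolding D_def Dset_def by blast
    obtain q' where q': "path T q' (Inl a) (Inr w')" "Inl e \<notin> set q'" using ww unfolding D_def Dset_def by blast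
    have "path T (q @ [Inl e]) (Inl a) (Inl e)" using path_snoc[OF q(1) _ q(2)] w by (simp add: adj_Inr_Inl)
    moreover have "path T (q' @ [Inl e]) (Inl a) (Inl e)" using path_snoc[OF q'(1) _ q'(2)] ww by (simp add: adj_Inr_Inl)
    moreover have "Inl e \<in> verts E V" using eE by (simp add: verts_def)
    ultimately have "q @ [Inl e] = q' @ [Inl e]" using Ttree aV unfolding is_tree_def by blast
    then have "q = q'" by simp
    then show ?thesis using q q' by (auto simp: path_def walk_def)
  qed
  define T'' where "T'' = insert (e2, v2) (T - {(e, w)})"
  have T''G: "T'' \<subseteq> G" using T T' ev2(1) by (auto simp: T''_def spanning_tree_def)
  have T''S: "T'' \<subseteq> E \<times> V" using T''G GS by blast
  have cardT: "card T + 1 = card E + card V" using tree_card[OF fin TS Ttree] aE by blast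
  have cardT'': "card T'' = card T"
  proof -
    have "card T > 0" using w(2) finT card_gt_0_iff by blast
    then show ?thesis using e2T w(2) finT by (simp add: T''_def card_insert_if card_Diff_singleton)
  qed
  have sufw: "walk (T - {(e, w)}) (drop i p) (Inl e) (Inr v2)"
  proof -
    have "walk T (drop i p) (Inl e) (Inr v2)" using walk_drop[of T p "Inl a" "Inr v2" i] p i
      by (simp add: path_def)
    moreover have "Inr w \<notin> set (drop i p)"
    proof
      assume "Inr w \<in> set (drop i p)"
      then obtain k where "k < length (drop i p)" "drop i p ! k = Inr w" by (meson in_set_conv_nth)
      then have k: "i + k < length p" "p ! (i + k) = p ! (i - 1)" using w by auto
      moreover have "i - 1 < length p" using i(1) by simp
      ultimately have "i + k = i - 1" using nth_eq_iff_index_eq[OF dp, of "i + k" "i - 1"] by simp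
      then show False using i0 by simp
    qed
    moreover have "joins (e, w) (Inr w) (Inl e)" by (simp add: joins_def)
    ultimately show ?thesis using walk_avoid by metis
  qed
  have TT'': "T - {(e, w)} \<subseteq> T''" by (auto simp: T''_def)
  have r1: "(adj T'')\<^sup>*\<^sup>* (Inl e) (Inr v2)"
    using walk_reach[OF walk_mono[OF sufw TT'']] .
  have r2: "adj T'' (Inr v2) (Inl e2)" by (simp add: T''_def adj_Inr_Inl)
  have FDT'': "FD \<subseteq> T''" using De by (auto simp: FD_def SD_def T''_def)
  have liftFD: "\<forall>u w. adj FD u w \<longrightarrow> (adj T'')\<^sup>*\<^sup>* u w" using adj_mono[OF FDT''] by blast
  have e2D: "Inl e2 \<in> D" using ev2(2) by (simp add: SD_def)
  have r3: "(adj T'')\<^sup>*\<^sup>* (Inl e2) (Inr w)"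
  proof -
    have "(adj T'')\<^sup>*\<^sup>* (Inl a) (Inl e2)" using reach_lift[OF Dreach[OF e2D] liftFD] .
    moreover have "(adj T'')\<^sup>*\<^sup>* (Inl a) (Inr w)" using reach_lift[OF Dreach[OF wD] liftFD] .
    ultimately show ?thesis using reach_sym rtranclp_trans by metis
  qed
  have key: "(adj T'')\<^sup>*\<^sup>* (Inl e) (Inr w)"
    using r1 r2 r3 by (meson rtranclp.rtrancl_into_rtrancl rtranclp_trans)
  have liftT: "\<forall>u u'. adj T u u' \<longrightarrow> (adj T'')\<^sup>*\<^sup>* u u'"
  proof (intro allI impI)
    fix u u' assume uu: "adj T u u'"
    obtain g where g: "g \<in> T" "joins g u u'" using uu adj_joins by metis
    show "(adj T'')\<^sup>*\<^sup>* u u'"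
    proof (cases "g = (e, w)")
      case True
      then have "(u = Inl e \<and> u' = Inr w) \<or> (u = Inr w \<and> u' = Inl e)"
        using g(2) by (auto simp: joins_def)
      then show ?thesis using key reach_sym by metis
    next
      case False
      then have "adj T'' u u'" using g adj_joins[of T'' u u'] by (auto simp: T''_def)
      then show ?thesis by simp
    qed
  qed
  have connT: "\<forall>x\<in>verts E V. (adj T)\<^sup>*\<^sup>* (Inl a) x"
    using Ttree aV unfolding is_tree_def path_def by (meson walk_reach)
  have connT'': "\<forall>x\<in>verts E V. (adj T'')\<^sup>*\<^sup>* (Inl a) x"
    using connT liftT reach_lift by metis
  have T''tree: "is_tree E V T''"
    using tree_char[OF fin T''S aV connT''] cardT cardT'' by simp
  have T''sp: "spanning_tree E V G T''" using T''G T''tree by (simp add: spanning_tree_def)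
  have degT'': "deg T'' x + (if x = b then 1 else 0) = f x + 1 + (if x = e2 then 1 else 0)"
    if xE: "x \<in> E" for x
  proof -
    have finx: "finite {v. (x, v) \<in> T}" using deg_finite[OF TS fin(2)] .
    consider "x = e" | "x = e2" | "x \<noteq> e" "x \<noteq> e2" by blast
    then show ?thesis
    proof cases
      case 1
      then have "{v. (x, v) \<in> T''} = {v. (x, v) \<in> T} - {w}" using e2e by (auto simp: T''_def)
      then have "deg T'' x = deg T x - 1" using w(2) 1 finx by (simp add: deg_def card_Diff_singleton)
      moreover have "deg T x \<ge> 1" using w(2) 1 finx unfolding deg_def
        by (metis (mono_tags, lifting) One_nat_def Suc_leI card_gt_0_iff empty_iff mem_Collect_eq)
      ultimately show ?thesis using Tdeg xE 1 e2e by auto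
    next
      case 2
      then have "{v. (x, v) \<in> T''} = insert v2 {v. (x, v) \<in> T}" using e2e by (auto simp: T''_def)
      then have "deg T'' x = deg T x + 1" using e2T 2 finx by (simp add: deg_def)
      then show ?thesis using Tdeg xE 2 e2e by auto
    next
      case 3
      then have "{v. (x, v) \<in> T''} = {v. (x, v) \<in> T}" by (auto simp: T''_def)
      then have "deg T'' x = deg T x" by (simp add: deg_def)
      then show ?thesis using Tdeg xE 3 by auto
    qed
  qed
  have Dsub'': "Dset a T'' e2 \<subseteq> D"
  proof
    fix y assume "y \<in> Dset a T'' e2"
    then obtain q where q: "path T'' q (Inl a) y" "Inl e2 \<notin> set q" unfolding Dset_def by blast
    have qhd: "hd q = Inl a" "q \<noteq> []" using q(1) unfolding path_def walk_def by blast+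
    then have q0: "q ! 0 = Inl a" by (simp add: hd_conv_nth)
    have qwalk: "\<forall>i. Suc i < length q \<longrightarrow> adj T'' (q ! i) (q ! Suc i)"
      using q(1) unfolding path_def walk_def by blast
    have "q ! k \<in> D" if "k < length q" for k
      using that
    proof (induction k)
      case 0 then show ?case using q0 Da by simp
    next
      case (Suc k)
      have kD: "q ! k \<in> D" using Suc.IH Suc.prems by simp
      have aq: "adj T'' (q ! k) (q ! Suc k)" using qwalk Suc.prems by blast
      have "q ! k \<in> set q" "q ! Suc k \<in> set q" using Suc.prems by simp_all
      then have n1: "q ! k \<noteq> Inl e2" "q ! Suc k \<noteq> Inl e2" using q(2) by metis+
      obtain g where g: "g \<in> T''" "joins g (q ! k) (q ! Suc k)" using aq unfolding adj_joins by blast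
      have "g \<noteq> (e2, v2)" using g(2) n1 unfolding joins_def by auto
      then have gT: "g \<in> T" "g \<noteq> (e, w)" using g(1) unfolding T''_def by blast+
      have "\<exists>g\<in>T. joins g (q ! k) (q ! Suc k)" using gT(1) g(2) by (rule rev_bexI)
      then have aT: "adj T (q ! k) (q ! Suc k)" by (simp only: adj_joins)
      have "q ! Suc k \<noteq> Inl e"
      proof
        assume qe: "q ! Suc k = Inl e"
        obtain ge v' where gg: "g = (ge, v')" by (cases g)
        have jj: "joins (ge, v') (q ! k) (Inl e)" using g(2) qe gg by simp
        then have v': "q ! k = Inr v'" "g = (e, v')" using gg unfolding joins_def by simp_all
        then have "v' = w" using wuniq[of v'] kD gT(1) by simp
        then show False using gT(2) v' by simp
      qed
      then show ?case using Dcl[OF kD aT] by simp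
    qed
    moreover have "y = q ! (length q - 1)" "length q - 1 < length q" using q(1) qhd(2)
      unfolding path_def walk_def by (auto simp: last_conv_nth)
    ultimately show "y \<in> D" by simp
  qed
  have "Inl e2 \<notin> Dset a T'' e2" unfolding Dset_def using path_last_in by fastforce
  then have "Dset a T'' e2 \<subset> D" using Dsub'' e2D by blast
  then show ?thesis using T''sp e2E degT'' unfolding D_def by blast
qed

lemma iter:
  assumes fin: "finite E" "finite V" and GS: "G \<subseteq> E \<times> V"
    and T': "spanning_tree E V G T'"
    and T'deg: "\<forall>x\<in>E. x \<noteq> c \<longrightarrow> deg T' x = f x + 1 + (if x = a then 1 else 0)"
    and aE: "a \<in> E"
  shows "spanning_tree E V G T \<Longrightarrow> e \<in> E \<Longrightarrow>
    (\<forall>x\<in>E. deg T x + (if x = b then 1 else 0) = f x + 1 + (if x = e then 1 else 0)) \<Longrightarrow>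
    Inl b \<notin> Dset a T e \<Longrightarrow> Inl c \<notin> Dset a T e \<Longrightarrow>
    \<exists>T2. spanning_tree E V G T2 \<and>
      (\<forall>x\<in>E. deg T2 x + (if x = b then 1 else 0) = f x + 1 + (if x = a then 1 else 0))"
proof (induction "card (Dset a T e)" arbitrary: T e rule: less_induct)
  case less
  show ?case
  proof (cases "e = a")
    case True then show ?thesis using less.prems by blast
  next
    case False
    obtain T'' e2 where st: "spanning_tree E V G T''" "e2 \<in> E"
      "\<forall>x\<in>E. deg T'' x + (if x = b then 1 else 0) = f x + 1 + (if x = e2 then 1 else 0)"
      "Dset a T'' e2 \<subset> Dset a T e"
      using step[OF fin GS T' T'deg aE less.prems(1,2) False less.prems(3,4,5)] by blast
    have "finite (Dset a T e)"
    proof -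
      have "Dset a T e \<subseteq> verts E V"
      proof
        fix x assume "x \<in> Dset a T e"
        then obtain p where p: "path T p (Inl a) x" unfolding Dset_def by blast
        have "T \<subseteq> E \<times> V" using less.prems(1) GS by (auto simp: spanning_tree_def)
        then have "set p \<subseteq> verts E V" using walk_verts[of T p "Inl a" x E V] p aE
          by (auto simp: path_def verts_def)
        then show "x \<in> verts E V" using path_last_in[OF p] by blast
      qed
      then show ?thesis using finite_verts[OF fin] finite_subset by blast
    qed
    then have "card (Dset a T'' e2) < card (Dset a T e)" using st(4) psubset_card_mono by blast
    moreover have "Inl b \<notin> Dset a T'' e2" "Inl c \<notin> Dset a T'' e2" using st(4) less.prems(4,5) by blast+
    ultimately show ?thesis using less.hyps st(1,2,3) by blast
  qed
qed

theorem lemma4p2: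
  fixes E :: "'e set" and V :: "'v set" and G \<Gamma> :: "('e \<times> 'v) set"
    and f :: "'e \<Rightarrow> nat" and a b c :: 'e
  assumes "bip_graph E V G"
    and "connected_bip E V G"
    and "induces E V G \<Gamma> f"
    and "a \<in> E" and "b \<in> E" and "c \<in> E"
    and "a \<noteq> b" and "b \<noteq> c" and "a \<noteq> c"
    and "\<forall>p. path \<Gamma> p (Inl c) (Inl a) \<longrightarrow> Inl b \<in> set p"
    and "can_transfer E V G f c a"
  shows "can_transfer E V G f b a"
proof -
  have fin: "finite E" "finite V" and GS: "G \<subseteq> E \<times> V" using assms(1) by (auto simp: bip_graph_def)
  have Gsp: "spanning_tree E V G \<Gamma>" and Gdeg: "\<forall>x\<in>E. deg \<Gamma> x = f x + 1"
    using assms(3) by (auto simp: induces_def)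
  obtain T' where T': "induces E V G T' (f(c := f c - 1, a := f a + 1))"
    using assms(11) by (auto simp: can_transfer_def hypertree_def)
  have T'sp: "spanning_tree E V G T'" using T' by (simp add: induces_def)
  have T'deg: "\<forall>x\<in>E. x \<noteq> c \<longrightarrow> deg T' x = f x + 1 + (if x = a then 1 else 0)"
    using T' assms(9) by (auto simp: induces_def)
  have inv: "\<forall>x\<in>E. deg \<Gamma> x + (if x = b then 1 else 0) = f x + 1 + (if x = b then 1 else 0)"
    using Gdeg by simp
  have bD: "Inl b \<notin> Dset a \<Gamma> b" unfolding Dset_def using path_last_in by fastforce
  have cD: "Inl c \<notin> Dset a \<Gamma> b"
  proof
    assume "Inl c \<in> Dset a \<Gamma> b"
    then obtain p where p: "path \<Gamma> p (Inl a) (Inl c)" "Inl b \<notin> set p" unfolding Dset_def by blast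
    then have "Inl b \<in> set (rev p)" using assms(10) path_rev by blast
    then show False using p(2) by simp
  qed
  obtain T2 where T2: "spanning_tree E V G T2"
    "\<forall>x\<in>E. deg T2 x + (if x = b then 1 else 0) = f x + 1 + (if x = a then 1 else 0)"
    using iter[OF fin GS T'sp T'deg assms(4) Gsp assms(5) inv bD cD] by blast
  have T2S: "T2 \<subseteq> E \<times> V" and T2tree: "is_tree E V T2" using T2(1) GS by (auto simp: spanning_tree_def)
  have degb: "deg T2 b = f b" using T2(2) assms(5,7) by auto
  have "deg T2 b \<ge> 1"
  proof -
    have "Inl b \<in> verts E V" "Inl a \<in> verts E V" using assms(4,5) by (auto simp: verts_def)
    then obtain p where p: "path T2 p (Inl b) (Inl a)" using T2tree unfolding is_tree_def by blast
    obtain z p' where zp: "p = z # p'" using p by (cases p) (auto simp: path_def walk_def)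
    have "p' \<noteq> []" using p zp assms(7) by (auto simp: path_def walk_def)
    then have "adj T2 (Inl b) (hd p')" using walk_ConsD[of T2 z p' "Inl b" "Inl a"] p zp
      by (auto simp: path_def)
    then obtain v where "(b, v) \<in> T2" by (cases rule: adj_cases) auto
    moreover have "finite {v. (b, v) \<in> T2}" using deg_finite[OF T2S fin(2)] .
    ultimately show ?thesis unfolding deg_def
      by (metis (mono_tags, lifting) One_nat_def Suc_leI card_gt_0_iff empty_iff mem_Collect_eq)
  qed
  then have fb: "1 \<le> f b" using degb by simp
  have "induces E V G T2 (f(b := f b - 1, a := f a + 1))"
    unfolding induces_def
  proof (intro conjI ballI)
    show "spanning_tree E V G T2" using T2(1) .
  next
    fix x assume x: "x \<in> E"
    show "deg T2 x = (f(b := f b - 1, a := f a + 1)) x + 1"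
      using T2(2) x fb assms(7) by auto
  qed
  then show ?thesis using fb unfolding can_transfer_def hypertree_def by blast
qed

end
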